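(* Fix an integer $m>1$. Let $\{z_n\}$ be generated by $\mathcal{S}(\kappa,\Phi)$ with $\kappa$ satisfying $\sum_{n}\rho^{\kappa(n)}=\infty$ for all $0<\rho\le1$ and $\Phi(x,S)=d(x,S)=\inf_{s\in S}d(x,s)$, and let $\zeta_n$ now denote the $m$ nearest neighbors prediction $\zeta_n(x)=\operatorname{mode}_f(U_{Z_n}(x))$. If $x\in\operatorname{supp}(\mu)$ is not an $f$-boundary point, then $\zeta_n(x)\to f(x)$ with probability one.
   Context: $(X,d)$ metric space with probability measure $\mu$; $Y$ countable; $f:X\to Y$; $X_y=f^{-1}(y)$; $B_\epsilon(x)$ open ball; $\operatorname{supp}(\mu)=\{x:\mu(B_\epsilon(x))>0\ \forall\epsilon>0\}$. $b$ is an $f$-boundary point iff $\mu(B_\epsilon(b)\setminus X_{f(b)})>0$ for all $\epsilon>0$. Process $\mathcal{S}(\kappa,\Phi)$: $Z_0=\emptyset$; at step $n$ draw $\kappa(n)$ candidates i.i.d. from $\mu$, independent of the past; $z_n$ maximizes $\Phi(\cdot,Z_{n-1})$ over candidates (ties uniformly at random); $Z_n=\{z_1,\dots,z_n\}$. For finite $A$, $\operatorname{modefreq}_f(A)=\max_y|A\cap X_y|$ and $\operatorname{mode}_f(A)$ is a value $y$ attaining this maximum (ties uniformly at random). $m$ nearest neighbors: for $S\subseteq X$ let $\mathcal{U}_x$ be the family of $m$-element subsets of $S$ minimizing distance to $x$; $U_S(x)=\{x\}$ if $x\in S$, otherwise $U_S(x)=\arg\min_{U\in\mathcal{U}_x}\operatorname{modefreq}_f(U)$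 (for $n<m$, use all of $Z_n$). *)

theory Defs
  imports "HOL-Probability.Probability"
begin

definition in_supp :: "'a::metric_space measure \<Rightarrow> 'a \<Rightarrow> bool" where
  "in_supp \<mu> x \<longleftrightarrow> (\<forall>\<epsilon>>0. measure \<mu> (ball x \<epsilon>) > 0)"

definition is_f_boundary :: "'a::metric_space measure \<Rightarrow> ('a \<Rightarrow> 'b) \<Rightarrow> 'a \<Rightarrow> bool" where
  "is_f_boundary \<mu> f b \<longleftrightarrow> (\<forall>\<epsilon>>0. measure \<mu> (ball b \<epsilon> - f -` {f b}) > 0)"

text \<open>Given a finite set A and a number v (uniform on [0,1)), pick the element
  of index floor(v * card A) under a fixed enumeration of A; this is a uniformly
  random element of A when v is uniform on [0,1).\<close>

definition unif_pick :: "'b set \<Rightarrow> real \<Rightarrow> 'b" where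
  "unif_pick A v = (SOME e. bij_betw e {..<card A} A) (nat \<lfloor>v * real (card A)\<rfloor>)"

definition unif01 :: "real measure" where
  "unif01 = uniform_measure lborel {0..<1}"

text \<open>Randomness: C k j is the j-th candidate drawn at step k (only j < kappa k are used),
  T k i are independent uniform [0,1) tie-breaking variables:
  T k 0 for the selection at step k, T k 1 for the choice of the neighbour set
  and T k 2 for the mode in the prediction at time k.\<close>

definition sample_space :: "'a measure \<Rightarrow> ((nat \<Rightarrow> nat \<Rightarrow> 'a) \<times> (nat \<Rightarrow> nat \<Rightarrow> real)) measure" where
  "sample_space \<mu> = (PiM UNIV (\<lambda>_::nat. PiM UNIV (\<lambda>_::nat. \<mu>)))
       \<Otimes>\<^sub>M (PiM UNIV (\<lambda>_::nat. PiM UNIV (\<lambda>_::nat. unif01)))"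

definition maximizers :: "(nat \<Rightarrow> nat) \<Rightarrow> ('a \<Rightarrow> 'a set \<Rightarrow> real) \<Rightarrow> (nat \<Rightarrow> nat \<Rightarrow> 'a) \<Rightarrow> nat \<Rightarrow> 'a set \<Rightarrow> nat set" where
  "maximizers \<kappa> \<Phi> C k Z = {j. j < \<kappa> k \<and> (\<forall>i<\<kappa> k. \<Phi> (C k i) Z \<le> \<Phi> (C k j) Z)}"

primrec Zlist :: "(nat \<Rightarrow> nat) \<Rightarrow> ('a \<Rightarrow> 'a set \<Rightarrow> real) \<Rightarrow> (nat \<Rightarrow> nat \<Rightarrow> 'a) \<Rightarrow> (nat \<Rightarrow> nat \<Rightarrow> real) \<Rightarrow> nat \<Rightarrow> 'a list" where
  "Zlist \<kappa> \<Phi> C T 0 = []"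
| "Zlist \<kappa> \<Phi> C T (Suc n) =
     Zlist \<kappa> \<Phi> C T n @
       [C (Suc n) (unif_pick (maximizers \<kappa> \<Phi> C (Suc n) (set (Zlist \<kappa> \<Phi> C T n))) (T (Suc n) 0))]"

definition Zset :: "(nat \<Rightarrow> nat) \<Rightarrow> ('a \<Rightarrow> 'a set \<Rightarrow> real) \<Rightarrow> (nat \<Rightarrow> nat \<Rightarrow> 'a) \<Rightarrow> (nat \<Rightarrow> nat \<Rightarrow> real) \<Rightarrow> nat \<Rightarrow> 'a set" where
  "Zset \<kappa> \<Phi> C T n = set (Zlist \<kappa> \<Phi> C T n)"

definition modefreq :: "('a \<Rightarrow> 'b) \<Rightarrow> 'a set \<Rightarrow> nat" where
  "modefreq f A = Max ((\<lambda>y. card (A \<inter> f -` {y})) ` f ` A)"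

definition modes :: "('a \<Rightarrow> 'b) \<Rightarrow> 'a set \<Rightarrow> 'b set" where
  "modes f A = {y \<in> f ` A. card (A \<inter> f -` {y}) = modefreq f A}"

definition mode_f :: "('a \<Rightarrow> 'b) \<Rightarrow> 'a set \<Rightarrow> real \<Rightarrow> 'b" where
  "mode_f f A v = unif_pick (modes f A) v"

definition nn_family :: "nat \<Rightarrow> 'a::metric_space set \<Rightarrow> 'a \<Rightarrow> 'a set set" where
  "nn_family m S x = {U. U \<subseteq> S \<and> card U = m \<and> (\<forall>u\<in>U. \<forall>s\<in>S - U. dist x u \<le> dist x s)}"

definition nn_worst :: "nat \<Rightarrow> ('a::metric_space \<Rightarrow> 'b) \<Rightarrow> 'a set \<Rightarrow> 'a \<Rightarrow> 'a set set" where
  "nn_worst m f S x = {U \<in> nn_family m S x. \<forall>U'\<in>nn_family m S x. modefreq f U \<le> modefreq f U'}"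

definition U_nn :: "nat \<Rightarrow> ('a::metric_space \<Rightarrow> 'b) \<Rightarrow> 'a set \<Rightarrow> 'a \<Rightarrow> real \<Rightarrow> 'a set" where
  "U_nn m f S x v =
     (if x \<in> S then {x}
      else if card S \<le> m then S
      else unif_pick (nn_worst m f S x) v)"

definition zeta_nn :: "nat \<Rightarrow> ('a::metric_space \<Rightarrow> 'b) \<Rightarrow> (nat \<Rightarrow> nat) \<Rightarrow> ('a \<Rightarrow> 'a set \<Rightarrow> real)
    \<Rightarrow> nat \<Rightarrow> 'a \<Rightarrow> (nat \<Rightarrow> nat \<Rightarrow> 'a) \<times> (nat \<Rightarrow> nat \<Rightarrow> real) \<Rightarrow> 'b" where
  "zeta_nn m f \<kappa> \<Phi> n x \<omega> =
     (let C = fst \<omega>; T = snd \<omega>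
      in mode_f f (U_nn m f (Zset \<kappa> \<Phi> C T n) x (T n 1)) (T n 2))"

end

theory Submission
  imports Defs
begin


lemma unif_pick_in:
  assumes "finite A" "A \<noteq> {}" "0 \<le> v" "v < 1"
  shows "unif_pick A v \<in> A"
proof -
  let ?e = "SOME e. bij_betw e {..<card A} A"
  have ex: "\<exists>e. bij_betw e {..<card A} A"
    using ex_bij_betw_nat_finite[OF assms(1)] by (simp add: atLeast0LessThan)
  have b: "bij_betw ?e {..<card A} A" by (rule someI_ex[OF ex])
  have c: "card A > 0" using assms by auto
  have "v * real (card A) < real (card A)" using assms c by simp
  hence "nat \<lfloor>v * real (card A)\<rfloor> < card A" using assms c
    by (simp add: floor_less_iff nat_less_iff)
  thus ?thesis unfolding unif_pick_def using bij_betw_apply[OF b] by auto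
qed

lemma maximizers_ne:
  assumes "\<kappa> k \<ge> 1"
  shows "maximizers \<kappa> \<Phi> C k Z \<noteq> {}" "finite (maximizers \<kappa> \<Phi> C k Z)"
proof -
  let ?V = "(\<lambda>i. \<Phi> (C k i) Z) ` {..<\<kappa> k}"
  have "finite ?V" "?V \<noteq> {}" using assms by (auto simp: lessThan_empty_iff)
  hence "Max ?V \<in> ?V" by (rule Max_in)
  then obtain j where j: "j < \<kappa> k" "Max ?V = \<Phi> (C k j) Z" by auto
  have "\<forall>i<\<kappa> k. \<Phi> (C k i) Z \<le> \<Phi> (C k j) Z"
    using j Max_ge[OF \<open>finite ?V\<close>] by (metis image_eqI lessThan_iff)
  thus "maximizers \<kappa> \<Phi> C k Z \<noteq> {}" using j unfolding maximizers_def by auto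
  show "finite (maximizers \<kappa> \<Phi> C k Z)" unfolding maximizers_def by auto
qed

lemma Zset_Suc:
  assumes "\<kappa> (Suc n) \<ge> 1" "0 \<le> T (Suc n) 0" "T (Suc n) 0 < 1"
  shows "\<exists>j<\<kappa> (Suc n). Zset \<kappa> \<Phi> C T (Suc n) = insert (C (Suc n) j) (Zset \<kappa> \<Phi> C T n)"
proof -
  let ?A = "maximizers \<kappa> \<Phi> C (Suc n) (set (Zlist \<kappa> \<Phi> C T n))"
  have ne: "?A \<noteq> {}" "finite ?A" using assms(1) by (rule maximizers_ne)+
  have "unif_pick ?A (T (Suc n) 0) \<in> ?A"
    using unif_pick_in[OF ne(2) ne(1)] assms by blast
  hence "unif_pick ?A (T (Suc n) 0) < \<kappa> (Suc n)" unfolding maximizers_def by auto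
  thus ?thesis unfolding Zset_def by auto
qed

lemma Zset_elems:
  assumes "\<forall>n\<ge>1. \<kappa> n \<ge> 1" "\<forall>k j. 0 \<le> T k j \<and> T k j < 1"
  shows "z \<in> Zset \<kappa> \<Phi> C T n \<Longrightarrow> \<exists>k j. 1 \<le> k \<and> k \<le> n \<and> j < \<kappa> k \<and> z = C k j"
proof (induction n)
  case 0 thus ?case by (simp add: Zset_def)
next
  case (Suc n)
  obtain j where j: "j<\<kappa> (Suc n)" "Zset \<kappa> \<Phi> C T (Suc n) = insert (C (Suc n) j) (Zset \<kappa> \<Phi> C T n)"
    using Zset_Suc[of \<kappa> n T \<Phi> C] assms by auto
  from Suc.prems j(2) have "z = C (Suc n) j \<or> z \<in> Zset \<kappa> \<Phi> C T n" by auto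
  thus ?case
  proof
    assume "z = C (Suc n) j" thus ?case using j(1) by (intro exI[of _ "Suc n"] exI[of _ j]) auto
  next
    assume "z \<in> Zset \<kappa> \<Phi> C T n"
    then obtain k i where "1 \<le> k" "k \<le> n" "i < \<kappa> k" "z = C k i" using Suc.IH by blast
    thus ?case by (intro exI[of _ k] exI[of _ i]) auto
  qed
qed

lemma Zset_mono: "n \<le> n' \<Longrightarrow> Zset \<kappa> \<Phi> C T n \<subseteq> Zset \<kappa> \<Phi> C T n'"
  by (induction n' rule: dec_induct) (auto simp: Zset_def)

lemma Zset_finite: "finite (Zset \<kappa> \<Phi> C T n)"
  by (simp add: Zset_def)

lemma nn_family_ne:
  assumes "finite S" "k \<le> card S"
  shows "nn_family k S x \<noteq> {}"
  using assms(2)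
proof (induction k)
  case 0
  have "{} \<in> nn_family 0 S x" unfolding nn_family_def by simp
  thus ?case by blast
next
  case (Suc k)
  then obtain U where U: "U \<subseteq> S" "card U = k" "\<forall>u\<in>U. \<forall>s\<in>S - U. dist x u \<le> dist x s"
    unfolding nn_family_def by auto
  have finU: "finite U" using finite_subset[OF U(1) assms(1)] .
  have "card U < card S" using U Suc.prems by simp
  have "\<not> S \<subseteq> U"
  proof
    assume "S \<subseteq> U" hence "card S \<le> card U" by (rule card_mono[OF finU])
    thus False using \<open>card U < card S\<close> by simp
  qed
  hence ne: "S - U \<noteq> {}" by blast
  have fin: "finite (S - U)" using assms by auto
  have "Min (dist x ` (S - U)) \<in> dist x ` (S - U)"
    using finite_imageI[OF fin] ne by (intro Min_in) simp_all
  then obtain s0 where s00: "s0 \<in> S - U" "dist x s0 = Min (dist x ` (S - U))" by auto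
  have s0le: "\<forall>s\<in>S - U. dist x s0 \<le> dist x s"
  proof
    fix s assume "s \<in> S - U"
    hence "dist x s \<in> dist x ` (S - U)" by blast
    thus "dist x s0 \<le> dist x s" unfolding s00(2) by (rule Min_le[OF finite_imageI[OF fin]])
  qed
  have c: "card (insert s0 U) = Suc k" using s00(1) finU U(2) by simp
  have sub: "insert s0 U \<subseteq> S" using s00(1) U(1) by blast
  have nn: "\<forall>u\<in>insert s0 U. \<forall>s\<in>S - insert s0 U. dist x u \<le> dist x s"
  proof (intro ballI)
    fix u s assume u: "u \<in> insert s0 U" and s: "s \<in> S - insert s0 U"
    show "dist x u \<le> dist x s"
    proof (cases "u = s0")
      case True thus ?thesis using s0le s by blast
    next
      case False thus ?thesis using u s U(3) by blast
    qed
  qed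
  have "insert s0 U \<in> nn_family (Suc k) S x"
    unfolding nn_family_def using c sub nn by blast
  thus ?case by blast
qed

lemma nn_family_finite: "finite S \<Longrightarrow> finite (nn_family k S x)"
  unfolding nn_family_def by (rule finite_subset[of _ "Pow S"]) auto

lemma nn_worst_ne:
  assumes "finite S" "k \<le> card S"
  shows "nn_worst k f S x \<noteq> {}" "finite (nn_worst k f S x)"
proof -
  let ?F = "nn_family k S x"
  have F: "finite ?F" "?F \<noteq> {}" using nn_family_ne nn_family_finite assms by auto
  have "Min (modefreq f ` ?F) \<in> modefreq f ` ?F"
    using finite_imageI[OF F(1)] F(2) by (intro Min_in) simp_all
  then obtain U where U0: "U \<in> ?F" "modefreq f U = Min (modefreq f ` ?F)" by auto
  have U: "U \<in> ?F" "\<forall>U'\<in>?F. modefreq f U \<le> modefreq f U'"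
    using U0(1) apply simp
    unfolding U0(2) using Min_le[OF finite_imageI[OF F(1)]] by blast
  thus "nn_worst k f S x \<noteq> {}" unfolding nn_worst_def by auto
  show "finite (nn_worst k f S x)" using F unfolding nn_worst_def by auto
qed

lemma mode_const:
  assumes "finite A" "A \<noteq> {}" "\<forall>a\<in>A. f a = c" "0 \<le> v" "v < 1"
  shows "mode_f f A v = c"
proof -
  have fA: "f ` A = {c}" using assms by auto
  have "modes f A = {c}" unfolding modes_def modefreq_def fA by auto
  thus ?thesis unfolding mode_f_def using unif_pick_in[of "{c}" v] assms by auto
qed



lemma growth:
  fixes x :: "'a::metric_space" and C :: "nat \<Rightarrow> nat \<Rightarrow> 'a"
  assumes kap: "\<forall>n\<ge>1. \<kappa> n \<ge> 1" and T: "\<forall>k j. 0 \<le> T k j \<and> T k j < 1"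
    and eps: "\<epsilon> > 0"
    and inf: "\<forall>q N. \<exists>k\<ge>N. k \<ge> 1 \<and> (\<forall>j<\<kappa> k. C k j \<in> ball x (1 / real (Suc q)))"
  shows "\<exists>n. x \<in> Zset \<kappa> \<Phi> C T n \<or> i \<le> card (Zset \<kappa> \<Phi> C T n \<inter> ball x \<epsilon>)"
proof (induction i)
  case 0 show ?case by simp
next
  case (Suc i)
  then obtain n where n: "x \<in> Zset \<kappa> \<Phi> C T n \<or> i \<le> card (Zset \<kappa> \<Phi> C T n \<inter> ball x \<epsilon>)" by blast
  show ?case
  proof (cases "x \<in> Zset \<kappa> \<Phi> C T n")
    case True thus ?thesis by blast
  next
    case False
    let ?S = "Zset \<kappa> \<Phi> C T n"
    have ci: "i \<le> card (?S \<inter> ball x \<epsilon>)" using n False by blast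
    let ?D = "insert \<epsilon> (dist x ` ?S)"
    have finD: "finite ?D" using Zset_finite by blast
    define \<delta> where "\<delta> = Min ?D"
    have dpos: "\<delta> > 0" unfolding \<delta>_def
    proof (subst Min_gr_iff[OF finD])
      show "?D \<noteq> {}" by blast
      show "\<forall>a\<in>?D. 0 < a" using eps False by auto
    qed
    have dle: "\<delta> \<le> \<epsilon>" "\<And>s. s \<in> ?S \<Longrightarrow> \<delta> \<le> dist x s"
      unfolding \<delta>_def using Min_le[OF finD] by auto
    obtain q0 where q0: "q0 > 0" "inverse (real q0) < \<delta>" using ex_inverse_of_nat_less[OF dpos] by blast
    obtain q where "q0 = Suc q" using q0(1) by (cases q0) auto
    hence q: "inverse (real (Suc q)) < \<delta>" using q0(2) by simp
    obtain k where k: "k \<ge> Suc n" "k \<ge> 1" "\<forall>j<\<kappa> k. C k j \<in> ball x (1 / real (Suc q))"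
      using inf by blast
    obtain k' where k': "k = Suc k'" using k by (cases k) auto
    have "k' \<ge> n" using k k' by simp
    obtain j where j: "j < \<kappa> (Suc k')" "Zset \<kappa> \<Phi> C T (Suc k') = insert (C (Suc k') j) (Zset \<kappa> \<Phi> C T k')"
      using Zset_Suc[of \<kappa> k' T \<Phi> C] kap T by auto
    let ?z = "C k j"
    have zb: "dist x ?z < \<delta>" using k(3) j(1) k' q by (auto simp: divide_inverse)
    have zS: "?z \<notin> ?S"
    proof
      assume "?z \<in> ?S" hence "\<delta> \<le> dist x ?z" by (rule dle(2))
      thus False using zb by simp
    qed
    have zball: "?z \<in> ball x \<epsilon>" using zb dle(1) by simp
    have zin: "?z \<in> Zset \<kappa> \<Phi> C T k" using j k' by simp
    have sub: "?S \<subseteq> Zset \<kappa> \<Phi> C T k" using Zset_mono[of n k] \<open>k \<ge> Suc n\<close> by simp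
    have "insert ?z (?S \<inter> ball x \<epsilon>) \<subseteq> Zset \<kappa> \<Phi> C T k \<inter> ball x \<epsilon>"
      using zin sub zball by blast
    hence "card (insert ?z (?S \<inter> ball x \<epsilon>)) \<le> card (Zset \<kappa> \<Phi> C T k \<inter> ball x \<epsilon>)"
      by (intro card_mono) (simp_all add: Zset_finite)
    moreover have "card (insert ?z (?S \<inter> ball x \<epsilon>)) = Suc (card (?S \<inter> ball x \<epsilon>))"
      using zS by (simp add: Zset_finite)
    ultimately have "Suc i \<le> card (Zset \<kappa> \<Phi> C T k \<inter> ball x \<epsilon>)" using ci by simp
    thus ?thesis by blast
  qed
qed

lemma det_main:
  fixes x :: "'a::metric_space" and C :: "nat \<Rightarrow> nat \<Rightarrow> 'a"
  assumes kap: "\<forall>n\<ge>1. \<kappa> n \<ge> 1" and T: "\<forall>k j. 0 \<le> T k j \<and> T k j < 1"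
    and eps: "\<epsilon> > 0" and m: "m > 0"
    and lab: "\<forall>k j. C k j \<in> ball x \<epsilon> \<longrightarrow> f (C k j) = f x"
    and inf: "\<forall>q N. \<exists>k\<ge>N. k \<ge> 1 \<and> (\<forall>j<\<kappa> k. C k j \<in> ball x (1 / real (Suc q)))"
  shows "eventually (\<lambda>n. zeta_nn m f \<kappa> \<Phi> n x (C, T) = f x) sequentially"
proof -
  obtain n0 where n0: "x \<in> Zset \<kappa> \<Phi> C T n0 \<or> Suc m \<le> card (Zset \<kappa> \<Phi> C T n0 \<inter> ball x \<epsilon>)"
    using growth[OF kap T eps inf] by blast
  show ?thesis unfolding eventually_sequentially
  proof (intro exI allI impI)
    fix n assume "n0 \<le> n"
    let ?S = "Zset \<kappa> \<Phi> C T n"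
    have sub: "Zset \<kappa> \<Phi> C T n0 \<subseteq> ?S" using Zset_mono[OF \<open>n0 \<le> n\<close>] .
    have finS: "finite ?S" by (rule Zset_finite)
    have labS: "f z = f x" if zS: "z \<in> ?S" and zB: "z \<in> ball x \<epsilon>" for z
    proof -
      obtain k j where "z = C k j" using Zset_elems[OF kap T zS] by blast
      thus ?thesis using lab zB by blast
    qed
    show "zeta_nn m f \<kappa> \<Phi> n x (C, T) = f x"
    proof (cases "x \<in> ?S")
      case True
      hence "U_nn m f ?S x (T n 1) = {x}" unfolding U_nn_def by simp
      thus ?thesis unfolding zeta_nn_def Let_def using mode_const[of "{x}" f "f x" "T n 2"] T by simp
    next
      case False
      hence big: "Suc m \<le> card (Zset \<kappa> \<Phi> C T n0 \<inter> ball x \<epsilon>)" using n0 sub by blast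
      have "card (Zset \<kappa> \<Phi> C T n0 \<inter> ball x \<epsilon>) \<le> card (?S \<inter> ball x \<epsilon>)"
        using sub by (intro card_mono) (simp_all add: finS, blast)
      hence big2: "Suc m \<le> card (?S \<inter> ball x \<epsilon>)" using big by simp
      have "card (?S \<inter> ball x \<epsilon>) \<le> card ?S" by (intro card_mono[OF finS]) blast
      hence cS: "\<not> card ?S \<le> m" using big2 by simp
      let ?W = "nn_worst m f ?S x"
      have mc: "m \<le> card ?S" using cS by simp
      have W1: "?W \<noteq> {}" by (rule nn_worst_ne(1)[OF finS mc])
      have W2: "finite ?W" by (rule nn_worst_ne(2)[OF finS mc])
      note W = W1 W2
      let ?U = "unif_pick ?W (T n 1)"
      have UW: "?U \<in> ?W" using unif_pick_in[OF W(2) W(1)] T by blast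
      hence UF: "?U \<in> nn_family m ?S x" unfolding nn_worst_def mem_Collect_eq by (rule conjunct1)
      have Uf: "?U \<subseteq> ?S" "card ?U = m" "\<forall>u\<in>?U. \<forall>s\<in>?S - ?U. dist x u \<le> dist x s"
        using UF unfolding nn_family_def mem_Collect_eq by blast+
      have Ub: "\<forall>u\<in>?U. u \<in> ball x \<epsilon>"
      proof
        fix u assume u: "u \<in> ?U"
        show "u \<in> ball x \<epsilon>"
        proof (rule ccontr)
          assume nu: "u \<notin> ball x \<epsilon>"
          have "\<not> (?S \<inter> ball x \<epsilon> \<subseteq> ?U)"
          proof
            assume "?S \<inter> ball x \<epsilon> \<subseteq> ?U"
            hence "card (?S \<inter> ball x \<epsilon>) \<le> card ?U"
              using Uf(2) m by (intro card_mono) (simp_all add: card_ge_0_finite)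
            thus False using big2 Uf(2) by simp
          qed
          then obtain s where s: "s \<in> ?S" "s \<in> ball x \<epsilon>" "s \<notin> ?U" by blast
          have "dist x u \<le> dist x s" using Uf(3) u s by blast
          thus False using s(2) nu by simp
        qed
      qed
      have finU: "finite ?U" "?U \<noteq> {}" using Uf(2) m by (auto simp: card_ge_0_finite)
      have "\<forall>u\<in>?U. f u = f x" using Ub Uf(1) labS by blast
      hence md: "mode_f f ?U (T n 2) = f x" using mode_const[OF finU, of f "f x" "T n 2"] T by blast
      have un: "U_nn m f ?S x (T n 1) = ?U" unfolding U_nn_def using False cS by (simp only: if_False)
      show ?thesis unfolding zeta_nn_def Let_def fst_conv snd_conv un md ..
    qed
  qed
qed



lemma (in product_prob_space) measure_PiM_Collect':
  assumes X: "J \<subseteq> I" "finite J" "\<And>i. i \<in> J \<Longrightarrow> X i \<in> sets (M i)"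
  shows "measure (Pi\<^sub>M I M) {x\<in>space (Pi\<^sub>M I M). \<forall>i\<in>J. x i \<in> X i} = (\<Prod> i\<in>J. measure (M i) (X i))"
proof -
  have "{x\<in>space (Pi\<^sub>M I M). \<forall>i\<in>J. x i \<in> X i} = emb I J (Pi\<^sub>E J X)"
    unfolding prod_emb_def using assms by (auto simp: space_PiM Pi_iff)
  with measure_PiM_emb[OF assms] show ?thesis by simp
qed

lemma diverge_partial:
  fixes p :: "nat \<Rightarrow> real"
  assumes nn: "\<And>k. 0 \<le> p k" and ns: "\<not> summable p"
  shows "\<exists>M. (\<Sum>k\<in>{N..M}. p k) > B"
proof (rule ccontr)
  assume "\<not> ?thesis"
  hence le: "\<And>M. (\<Sum>k\<in>{N..M}. p k) \<le> B" by (simp add: not_less)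
  have "(\<Sum>i<n. p i) \<le> (\<Sum>i<N. p i) + B" for n
  proof -
    have "{..<n} \<subseteq> {..<N} \<union> {N..n}" by auto
    hence "(\<Sum>i<n. p i) \<le> (\<Sum>i\<in>{..<N} \<union> {N..n}. p i)"
      by (intro sum_mono2) (auto simp: nn)
    also have "\<dots> = (\<Sum>i<N. p i) + (\<Sum>i\<in>{N..n}. p i)" by (rule sum.union_disjoint) auto
    also have "\<dots> \<le> (\<Sum>i<N. p i) + B" using le by simp
    finally show ?thesis .
  qed
  hence "summable p" by (intro summableI_nonneg_bounded[OF nn]) 
  thus False using ns by simp
qed

lemma prod_le_exp:
  fixes p :: "nat \<Rightarrow> real"
  assumes "finite K" "\<And>k. k \<in> K \<Longrightarrow> 0 \<le> p k \<and> p k \<le> 1"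
  shows "(\<Prod>k\<in>K. 1 - p k) \<le> exp (- (\<Sum>k\<in>K. p k))"
proof -
  have "(\<Prod>k\<in>K. 1 - p k) \<le> (\<Prod>k\<in>K. exp (- p k))"
  proof (rule prod_mono)
    fix k assume "k \<in> K"
    thus "0 \<le> 1 - p k \<and> 1 - p k \<le> exp (- p k)" using assms(2)[of k] exp_ge_add_one_self[of "- p k"] by simp
  qed
  also have "\<dots> = exp (- (\<Sum>k\<in>K. p k))"
    using exp_sum[OF assms(1), of "\<lambda>k. - p k"] by (simp add: sum_negf)
  finally show ?thesis .
qed

lemma AE_inf:
  fixes \<mu> :: "'a measure" and B :: "'a set" and \<kappa> :: "nat \<Rightarrow> nat"
  assumes P: "prob_space \<mu>" and B: "B \<in> sets \<mu>" and rho: "0 < measure \<mu> B"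
    and ns: "\<not> summable (\<lambda>n. (measure \<mu> B) ^ \<kappa> n)"
  shows "AE C in PiM UNIV (\<lambda>_::nat. PiM UNIV (\<lambda>_::nat. \<mu>)). \<forall>N. \<exists>k\<ge>N. k \<ge> 1 \<and> (\<forall>j<\<kappa> k. C k j \<in> B)"
proof -
  interpret \<mu>: prob_space \<mu> by (rule P)
  define \<rho> where "\<rho> = measure \<mu> B"
  have r1: "\<rho> \<le> 1" unfolding \<rho>_def by (rule \<mu>.prob_le_1)
  have r0: "0 \<le> \<rho>" unfolding \<rho>_def by simp
  interpret I: product_prob_space "\<lambda>_::nat. \<mu>" "UNIV::nat set"
    by (rule product_prob_spaceI) (rule P)
  define PM where "PM = PiM (UNIV::nat set) (\<lambda>_::nat. \<mu>)"
  have PMp: "prob_space PM" unfolding PM_def by (rule prob_space_PiM) (rule P)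
  interpret PM: prob_space PM by (rule PMp)
  interpret J: product_prob_space "\<lambda>_::nat. PM" "UNIV::nat set"
    by (rule product_prob_spaceI) (rule PMp)
  define M1 where "M1 = PiM (UNIV::nat set) (\<lambda>_::nat. PM)"
  define Ik where "Ik k = {c\<in>space PM. \<forall>j\<in>{..<\<kappa> k}. c j \<in> B}" for k
  have Iks: "Ik k \<in> sets PM" for k
    unfolding Ik_def PM_def
    by (rule sets.sets_Collect_finite_All) (auto intro: sets_Collect_single B)
  have Ikm: "measure PM (Ik k) = \<rho> ^ \<kappa> k" for k
    unfolding Ik_def PM_def \<rho>_def
    by (subst I.measure_PiM_Collect') (auto simp: B)
  define Ak where "Ak k = space PM - Ik k" for k
  have Aks: "Ak k \<in> sets PM" for k unfolding Ak_def using Iks by auto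
  have Akm: "measure PM (Ak k) = 1 - \<rho> ^ \<kappa> k" for k
    unfolding Ak_def using PM.prob_compl[OF Iks] Ikm by simp
  define Fin where "Fin N' M = {C\<in>space M1. \<forall>k\<in>{N'..M}. C k \<in> Ak k}" for N' M
  have Finm: "measure M1 (Fin N' M) = (\<Prod>k\<in>{N'..M}. 1 - \<rho> ^ \<kappa> k)" for N' M
    unfolding Fin_def M1_def
    by (subst J.measure_PiM_Collect') (auto simp: Aks Akm)
  interpret M1: prob_space M1 unfolding M1_def by (rule prob_space_PiM) (rule PMp)
  have Fins: "Fin N' M \<in> sets M1" for N' M
    unfolding Fin_def M1_def
    by (rule sets.sets_Collect_finite_All) (auto intro: sets_Collect_single Aks)
  define Nset where "Nset N' = {C\<in>space M1. \<forall>k\<in>{N'..}. C k \<in> Ak k}" for N'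
  have Nsets: "Nset N' \<in> sets M1" for N'
    unfolding Nset_def M1_def
    by (rule sets.sets_Collect_countable_All') (auto intro: sets_Collect_single Aks)
  have Nnull: "Nset N' \<in> null_sets M1" for N'
  proof -
    have "measure M1 (Nset N') \<le> \<eta>" if eta: "\<eta> > 0" for \<eta>
    proof -
      obtain M where M: "(\<Sum>k\<in>{N'..M}. \<rho> ^ \<kappa> k) > - ln \<eta>"
        using diverge_partial[of "\<lambda>k. \<rho> ^ \<kappa> k", OF _ ns[folded \<rho>_def]] r0 by auto
      have "measure M1 (Nset N') \<le> measure M1 (Fin N' M)"
        by (rule M1.finite_measure_mono[OF _ Fins]) (auto simp: Nset_def Fin_def)
      also have "\<dots> \<le> exp (- (\<Sum>k\<in>{N'..M}. \<rho> ^ \<kappa> k))"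
        unfolding Finm using r0 r1 by (intro prod_le_exp) (auto simp: power_le_one)
      also have "\<dots> \<le> exp (ln \<eta>)" using M by simp
      also have "\<dots> = \<eta>" using eta by simp
      finally show ?thesis .
    qed
    note epsle = this
    have "measure M1 (Nset N') \<le> 0"
    proof (rule ccontr)
      assume "\<not> measure M1 (Nset N') \<le> 0"
      hence pos: "measure M1 (Nset N') > 0" by simp
      have "measure M1 (Nset N') \<le> measure M1 (Nset N') / 2" using epsle[of "measure M1 (Nset N') / 2"] pos by simp
      thus False using pos by simp
    qed
    hence "measure M1 (Nset N') = 0" by (simp add: order_antisym)
    thus ?thesis using Nsets M1.emeasure_eq_measure by (simp add: null_sets_def)
  qed
  have "AE C in M1. \<exists>k\<ge>N. k \<ge> 1 \<and> (\<forall>j<\<kappa> k. C k j \<in> B)" for N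
  proof (rule AE_I'[OF Nnull[of "max N 1"]])
    show "{C \<in> space M1. \<not> (\<exists>k\<ge>N. k \<ge> 1 \<and> (\<forall>j<\<kappa> k. C k j \<in> B))} \<subseteq> Nset (max N 1)"
    proof
      fix C assume C: "C \<in> {C \<in> space M1. \<not> (\<exists>k\<ge>N. k \<ge> 1 \<and> (\<forall>j<\<kappa> k. C k j \<in> B))}"
      have "C k \<in> Ak k" if "k \<ge> max N 1" for k
      proof -
        have "C k \<in> space PM" using C unfolding M1_def by (auto simp: space_PiM)
        moreover have "\<not> (\<forall>j<\<kappa> k. C k j \<in> B)" using C that by auto
        ultimately show ?thesis unfolding Ak_def Ik_def by auto
      qed
      thus "C \<in> Nset (max N 1)" using C unfolding Nset_def by auto
    qed
  qed
  hence "AE C in M1. \<forall>N. \<exists>k\<ge>N. k \<ge> 1 \<and> (\<forall>j<\<kappa> k. C k j \<in> B)"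
    by (subst AE_all_countable) blast
  thus ?thesis unfolding M1_def PM_def .
qed



lemma distr_pair_snd':
  assumes N: "prob_space N" and M: "sigma_finite_measure M"
  shows "distr (N \<Otimes>\<^sub>M M) M snd = M"
proof (intro measure_eqI)
  fix A assume A: "A \<in> sets (distr (N \<Otimes>\<^sub>M M) M snd)"
  from A have "emeasure (distr (N \<Otimes>\<^sub>M M) M snd) A = emeasure (N \<Otimes>\<^sub>M M) (space N \<times> A)"
    by (auto simp add: emeasure_distr space_pair_measure dest: sets.sets_into_space intro!: arg_cong2[where f=emeasure])
  with A show "emeasure (distr (N \<Otimes>\<^sub>M M) M snd) A = emeasure M A"
    by (simp add: sigma_finite_measure.emeasure_pair_measure_Times[OF M] prob_space.emeasure_space_1[OF N])
qed simp

lemma AE_fst_lift: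
  assumes "prob_space M2" "AE x in M1. P x"
  shows "AE w in M1 \<Otimes>\<^sub>M M2. P (fst w)"
proof -
  have "AE x in distr (M1 \<Otimes>\<^sub>M M2) M1 fst. P x"
    by (subst prob_space.distr_pair_fst[OF assms(1)]) (rule assms(2))
  thus ?thesis by (rule AE_distrD[OF measurable_fst])
qed

lemma AE_snd_lift:
  assumes "prob_space M1" "prob_space M2" "AE x in M2. P x"
  shows "AE w in M1 \<Otimes>\<^sub>M M2. P (snd w)"
proof -
  have "AE x in distr (M1 \<Otimes>\<^sub>M M2) M2 snd. P x"
    by (subst distr_pair_snd'[OF assms(1) prob_space_imp_sigma_finite[OF assms(2)]]) (rule assms(3))
  thus ?thesis by (rule AE_distrD[OF measurable_snd])
qed

lemma unif01_prob: "prob_space unif01"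
  unfolding unif01_def by (rule prob_space_uniform_measure) simp_all

lemma unif01_AE: "AE v in unif01. 0 \<le> v \<and> v < 1"
  unfolding unif01_def by (subst AE_uniform_measure) simp_all

lemma AE_PiM2:
  assumes "prob_space \<mu>" "AE y in \<mu>. P y"
  shows "AE C in PiM UNIV (\<lambda>_::nat. PiM UNIV (\<lambda>_::nat. \<mu>)). \<forall>k j. P (C k j)"
proof -
  have p1: "prob_space (PiM UNIV (\<lambda>_::nat. \<mu>))" by (rule prob_space_PiM) (rule assms(1))
  have "AE C in PiM UNIV (\<lambda>_::nat. PiM UNIV (\<lambda>_::nat. \<mu>)). P (C k j)" for k j
  proof -
    have "AE c in PiM UNIV (\<lambda>_::nat. \<mu>). P (c j)"
      using AE_PiM_component[of UNIV "\<lambda>_::nat. \<mu>" j P] assms by simp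
    thus ?thesis
      using AE_PiM_component[of UNIV "\<lambda>_::nat. PiM UNIV (\<lambda>_::nat. \<mu>)" k "\<lambda>c. P (c j)"] p1 by simp
  qed
  thus ?thesis by (simp add: AE_all_countable)
qed



theorem mainTheorem11:
  fixes \<mu> :: "'a::metric_space measure"
    and f :: "'a \<Rightarrow> 'b"
    and \<kappa> :: "nat \<Rightarrow> nat"
    and m :: nat
    and x :: 'a
  assumes "prob_space \<mu>"
    and "sets \<mu> = sets borel"
    and "countable (UNIV :: 'b set)"
    and "f \<in> measurable \<mu> (count_space UNIV)"
    and "m > 1"
    and "\<forall>n\<ge>1. \<kappa> n \<ge> 1"
    and "\<forall>\<rho>::real. 0 < \<rho> \<and> \<rho> \<le> 1 \<longrightarrow> \<not> summable (\<lambda>n. \<rho> ^ \<kappa> n)"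
    and "in_supp \<mu> x"
    and "\<not> is_f_boundary \<mu> f x"
  shows "AE \<omega> in sample_space \<mu>.
           eventually (\<lambda>n. zeta_nn m f \<kappa> infdist n x \<omega> = f x) sequentially"
proof -
  note P = assms(1)
  interpret \<mu>: prob_space \<mu> by (rule P)
  have sp: "space \<mu> = UNIV" using sets_eq_imp_space_eq[OF assms(2)] by simp
  have ballS: "ball y r \<in> sets \<mu>" for y r using assms(2) by simp
  obtain \<epsilon> where eps: "\<epsilon> > 0" "\<not> measure \<mu> (ball x \<epsilon> - f -` {f x}) > 0"
    using assms(9) unfolding is_f_boundary_def by blast
  define Bd where "Bd = ball x \<epsilon> - f -` {f x}"
  have fpre: "f -` {f x} \<in> sets \<mu>"
    using measurable_sets[OF assms(4), of "{f x}"] sp by simp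
  have Bds: "Bd \<in> sets \<mu>" unfolding Bd_def using ballS fpre by blast
  have "measure \<mu> Bd = 0" using eps(2) unfolding Bd_def by (simp add: not_less order_antisym)
  hence Bdn: "Bd \<in> null_sets \<mu>" using Bds \<mu>.emeasure_eq_measure by (simp add: null_sets_def)
  have AElab: "AE y in \<mu>. y \<in> ball x \<epsilon> \<longrightarrow> f y = f x"
    by (rule AE_I'[OF Bdn]) (auto simp: Bd_def)
  define M1 where "M1 = PiM (UNIV::nat set) (\<lambda>_::nat. PiM (UNIV::nat set) (\<lambda>_::nat. \<mu>))"
  define M2 where "M2 = PiM (UNIV::nat set) (\<lambda>_::nat. PiM (UNIV::nat set) (\<lambda>_::nat. unif01))"
  have M1p: "prob_space M1" unfolding M1_def
    by (intro prob_space_PiM) (rule P)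
  have M2p: "prob_space M2" unfolding M2_def
    by (intro prob_space_PiM) (rule unif01_prob)
  have A1: "AE C in M1. \<forall>k j. C k j \<in> ball x \<epsilon> \<longrightarrow> f (C k j) = f x"
    unfolding M1_def by (rule AE_PiM2[OF P AElab])
  have A2: "AE T in M2. \<forall>k j. 0 \<le> T k j \<and> T k j < 1"
    unfolding M2_def by (rule AE_PiM2[OF unif01_prob unif01_AE])
  have "AE C in M1. \<forall>N. \<exists>k\<ge>N. k \<ge> 1 \<and> (\<forall>j<\<kappa> k. C k j \<in> ball x (1 / real (Suc q)))" for q
  proof -
    have pos: "0 < measure \<mu> (ball x (1 / real (Suc q)))"
      using assms(8) unfolding in_supp_def by simp
    have le1: "measure \<mu> (ball x (1 / real (Suc q))) \<le> 1" by (rule \<mu>.prob_le_1)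
    show ?thesis unfolding M1_def
      by (rule AE_inf[OF P ballS pos]) (use assms(7) pos le1 in blast)
  qed
  hence A3: "AE C in M1. \<forall>q N. \<exists>k\<ge>N. k \<ge> 1 \<and> (\<forall>j<\<kappa> k. C k j \<in> ball x (1 / real (Suc q)))"
    by (subst AE_all_countable) blast
  have A1': "AE w in M1 \<Otimes>\<^sub>M M2. \<forall>k j. fst w k j \<in> ball x \<epsilon> \<longrightarrow> f (fst w k j) = f x"
    by (rule AE_fst_lift[OF M2p A1])
  have A3': "AE w in M1 \<Otimes>\<^sub>M M2. \<forall>q N. \<exists>k\<ge>N. k \<ge> 1 \<and> (\<forall>j<\<kappa> k. fst w k j \<in> ball x (1 / real (Suc q)))"
    by (rule AE_fst_lift[OF M2p A3])
  have A2': "AE w in M1 \<Otimes>\<^sub>M M2. \<forall>k j. 0 \<le> snd w k j \<and> snd w k j < 1"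
    by (rule AE_snd_lift[OF M1p M2p A2])
  have ss: "sample_space \<mu> = M1 \<Otimes>\<^sub>M M2" unfolding sample_space_def M1_def M2_def ..
  have "AE w in M1 \<Otimes>\<^sub>M M2. eventually (\<lambda>n. zeta_nn m f \<kappa> infdist n x w = f x) sequentially"
    using A1' A2' A3'
  proof eventually_elim
    case (elim w)
    have "eventually (\<lambda>n. zeta_nn m f \<kappa> infdist n x (fst w, snd w) = f x) sequentially"
      by (rule det_main[OF assms(6) elim(2) eps(1) _ elim(1) elim(3)]) (use assms(5) in simp)
    thus ?case by simp
  qed
  thus ?thesis unfolding ss .
qed


end
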